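(* Let $(L,d)$ be a complete differential graded Lie algebra (cdgl) and let $M$ be a complete sub differential graded Lie algebra of $(\operatorname{Der} L, D)$, where $D\theta=[d,\theta]$. Let $\delta,\eta\in \operatorname{MC}(M)$. Then $\delta$ and $\eta$ are gauge related if and only if there exists $\theta\in M_0$ such that $$e^\theta\colon (L,d+\delta)\longrightarrow (L,d+\eta)$$ is an isomorphism of differential graded Lie algebras. Moreover, in that case the gauge action is given by $\theta\,\mathscr G\,\delta=\eta$.
   Context: All vector spaces are rational and $\mathbb Z$-graded. $\operatorname{Der} L$ is the graded Lie algebra of derivations of $L$ with bracket $[\theta,\eta]=\theta\circ\eta-(-1)^{|\theta||\eta|}\eta\circ\theta$ and differential $D\theta=d\circ\theta-(-1)^{|\theta|}\theta\circ d$. A cdgl is a dgl $L$ with a decreasing filtration by differential Lie ideals $L=F^1\supset F^2\supset\cdots$, $[F^p,F^q]\subset F^{p+q}$, such that $L\to\varprojlim_n L/F^n$ is an isomorphism. A Maurer–Cartan (MC) element of a dgl $M$ with differential $D$ is $a\in M_{-1}$ with $Da=-\frac12[a,a]$; $\operatorname{MC}(M)$ is the set of these. (For $M\subset \operatorname{Der}L$, $\delta\in M_{-1}$ is MC iff $d+\delta$ is a differential on $L$.) The gauge action of $M_0$ (a group with the Baker–Campbell–Hausdorff product) on $\operatorname{MC}(M)$ is $x\,\mathscr G\,a=\sum_{i\ge0}\frac{\operatorname{ad}_x^i(a)}{i!}-\sum_{i\ge0}\frac{\operatorname{ad}_x^i(Dx)}{(i+1)!}$; two MC elements are gauge related if they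 lie in the same orbit. $e^\theta=\sum_{n\ge0}\theta^n/n!$. *)

theory Defs
  imports Complex_Main
begin

text \<open>
A graded rational vector space is modelled by an ambient type 'a
(an abelian group with a rational scalar multiplication scale, required to be a
Q-vector space) together with its homogeneous components Lg n (n :: int); we require
that the ambient space is the direct sum of the Lg n.  Filtrations are indexed by nat and
only the indices n >= 1 are meaningful (F 1 is the whole space).
Derivations are maps 'a => 'a; the graded Lie algebra Der L is modelled by its
homogeneous components, and the sub dgl M by its homogeneous components Mg k.
\<close>

definition gsgn :: "int \<Rightarrow> rat" where
  "gsgn k = (if even k then 1 else -1)"

definition direct_graded :: "(int \<Rightarrow> 'a::ab_group_add set) \<Rightarrow> bool" where
  "direct_graded Lg \<longleftrightarrow>
     (\<forall>x. \<exists>!c. (\<forall>n. c n \<in> Lg n) \<and> finite {n. c n \<noteq> 0} \<and> x = (\<Sum>n\<in>{n. c n \<noteq> 0}. c n))"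

definition gcomp :: "(int \<Rightarrow> 'a::ab_group_add set) \<Rightarrow> 'a \<Rightarrow> int \<Rightarrow> 'a" where
  "gcomp Lg x = (THE c. (\<forall>n. c n \<in> Lg n) \<and> finite {n. c n \<noteq> 0} \<and> x = (\<Sum>n\<in>{n. c n \<noteq> 0}. c n))"

definition graded_lie_algebra ::
  "(rat \<Rightarrow> 'a::ab_group_add \<Rightarrow> 'a) \<Rightarrow> (int \<Rightarrow> 'a set) \<Rightarrow> ('a \<Rightarrow> 'a \<Rightarrow> 'a) \<Rightarrow> bool" where
  "graded_lie_algebra scale Lg br \<longleftrightarrow>
     vector_space scale \<and>
     (\<forall>n. module.subspace scale (Lg n)) \<and>
     direct_graded Lg \<and>
     (\<forall>x. Vector_Spaces.linear scale scale (br x)) \<and>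
     (\<forall>y. Vector_Spaces.linear scale scale (\<lambda>x. br x y)) \<and>
     (\<forall>p q x y. x \<in> Lg p \<longrightarrow> y \<in> Lg q \<longrightarrow> br x y \<in> Lg (p + q)) \<and>
     (\<forall>p q x y. x \<in> Lg p \<longrightarrow> y \<in> Lg q \<longrightarrow> br x y = scale (- gsgn (p * q)) (br y x)) \<and>
     (\<forall>p q r x y z. x \<in> Lg p \<longrightarrow> y \<in> Lg q \<longrightarrow> z \<in> Lg r \<longrightarrow>
        br x (br y z) = br (br x y) z + scale (gsgn (p * q)) (br y (br x z)))"

definition derivation ::
  "(rat \<Rightarrow> 'a::ab_group_add \<Rightarrow> 'a) \<Rightarrow> (int \<Rightarrow> 'a set) \<Rightarrow> ('a \<Rightarrow> 'a \<Rightarrow> 'a) \<Rightarrow> int \<Rightarrow> ('a \<Rightarrow> 'a) \<Rightarrow> bool" where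
  "derivation scale Lg br k \<theta> \<longleftrightarrow>
     Vector_Spaces.linear scale scale \<theta> \<and>
     (\<forall>n x. x \<in> Lg n \<longrightarrow> \<theta> x \<in> Lg (n + k)) \<and>
     (\<forall>p x y. x \<in> Lg p \<longrightarrow> \<theta> (br x y) = br (\<theta> x) y + scale (gsgn (k * p)) (br x (\<theta> y)))"

definition dgl ::
  "(rat \<Rightarrow> 'a::ab_group_add \<Rightarrow> 'a) \<Rightarrow> (int \<Rightarrow> 'a set) \<Rightarrow> ('a \<Rightarrow> 'a \<Rightarrow> 'a) \<Rightarrow> ('a \<Rightarrow> 'a) \<Rightarrow> bool" where
  "dgl scale Lg br d \<longleftrightarrow>
     graded_lie_algebra scale Lg br \<and> derivation scale Lg br (-1) d \<and> (\<forall>x. d (d x) = 0)"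

text \<open>Completeness of V with respect to a filtration F (indices >= 1), expressed as:
  V -> lim V/(F n \<inter> V) is bijective (Hausdorff + every compatible sequence has a limit).
  z is the zero of the ambient type.\<close>
definition filt_complete :: "'b::minus set \<Rightarrow> (nat \<Rightarrow> 'b set) \<Rightarrow> 'b \<Rightarrow> bool" where
  "filt_complete V F z \<longleftrightarrow>
     (\<forall>x\<in>V. (\<forall>n\<ge>1. x \<in> F n) \<longrightarrow> x = z) \<and>
     (\<forall>s. (\<forall>n. s n \<in> V) \<longrightarrow> (\<forall>n m. 1 \<le> n \<longrightarrow> n \<le> m \<longrightarrow> s m - s n \<in> F n) \<longrightarrow>
          (\<exists>y\<in>V. \<forall>n\<ge>1. y - s n \<in> F n))"

definition cdgl ::
  "(rat \<Rightarrow> 'a::ab_group_add \<Rightarrow> 'a) \<Rightarrow> (int \<Rightarrow> 'a set) \<Rightarrow> ('a \<Rightarrow> 'a \<Rightarrow> 'a) \<Rightarrow> ('a \<Rightarrow> 'a)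
     \<Rightarrow> (nat \<Rightarrow> 'a set) \<Rightarrow> bool" where
  "cdgl scale Lg br d F \<longleftrightarrow>
     dgl scale Lg br d \<and>
     F 1 = UNIV \<and>
     (\<forall>n\<ge>1. F (Suc n) \<subseteq> F n) \<and>
     (\<forall>n\<ge>1. module.subspace scale (F n)) \<and>
     (\<forall>n\<ge>1. \<forall>x\<in>F n. \<forall>k. gcomp Lg x k \<in> F n) \<and>
     (\<forall>n\<ge>1. \<forall>x\<in>F n. d x \<in> F n) \<and>
     (\<forall>n\<ge>1. \<forall>x y. y \<in> F n \<longrightarrow> br x y \<in> F n) \<and>
     (\<forall>p\<ge>1. \<forall>q\<ge>1. \<forall>x y. x \<in> F p \<longrightarrow> y \<in> F q \<longrightarrow> br x y \<in> F (p + q)) \<and>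
     (\<forall>k. filt_complete (Lg k) F 0)"

definition der_br ::
  "(rat \<Rightarrow> 'a::ab_group_add \<Rightarrow> 'a) \<Rightarrow> int \<Rightarrow> int \<Rightarrow> ('a \<Rightarrow> 'a) \<Rightarrow> ('a \<Rightarrow> 'a) \<Rightarrow> ('a \<Rightarrow> 'a)" where
  "der_br scale k l \<theta> \<eta> = (\<lambda>x. \<theta> (\<eta> x) - scale (gsgn (k * l)) (\<eta> (\<theta> x)))"

definition der_D ::
  "(rat \<Rightarrow> 'a::ab_group_add \<Rightarrow> 'a) \<Rightarrow> ('a \<Rightarrow> 'a) \<Rightarrow> int \<Rightarrow> ('a \<Rightarrow> 'a) \<Rightarrow> ('a \<Rightarrow> 'a)" where
  "der_D scale d k \<theta> = (\<lambda>x. d (\<theta> x) - scale (gsgn k) (\<theta> (d x)))"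

definition complete_sub_dgl ::
  "(rat \<Rightarrow> 'a::ab_group_add \<Rightarrow> 'a) \<Rightarrow> (int \<Rightarrow> 'a set) \<Rightarrow> ('a \<Rightarrow> 'a \<Rightarrow> 'a) \<Rightarrow> ('a \<Rightarrow> 'a)
     \<Rightarrow> (nat \<Rightarrow> 'a set) \<Rightarrow> (int \<Rightarrow> ('a \<Rightarrow> 'a) set) \<Rightarrow> (nat \<Rightarrow> ('a \<Rightarrow> 'a) set) \<Rightarrow> bool" where
  "complete_sub_dgl scale Lg br d F Mg MF \<longleftrightarrow>
     (\<forall>k. \<forall>\<theta>\<in>Mg k. derivation scale Lg br k \<theta>) \<and>
     (\<forall>k. (\<lambda>_. 0) \<in> Mg k) \<and>
     (\<forall>k. \<forall>\<theta>\<in>Mg k. \<forall>\<eta>\<in>Mg k. (\<lambda>x. \<theta> x + \<eta> x) \<in> Mg k) \<and>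
     (\<forall>k c. \<forall>\<theta>\<in>Mg k. (\<lambda>x. scale c (\<theta> x)) \<in> Mg k) \<and>
     (\<forall>k l. \<forall>\<theta>\<in>Mg k. \<forall>\<eta>\<in>Mg l. der_br scale k l \<theta> \<eta> \<in> Mg (k + l)) \<and>
     (\<forall>k. \<forall>\<theta>\<in>Mg k. der_D scale d k \<theta> \<in> Mg (k - 1)) \<and>
     \<comment> \<open>filtration of M\<close>
     (\<forall>k. Mg k \<subseteq> MF 1) \<and>
     (\<forall>n\<ge>1. MF (Suc n) \<subseteq> MF n) \<and>
     (\<forall>n\<ge>1. (\<lambda>_. 0) \<in> MF n) \<and>
     (\<forall>n\<ge>1. \<forall>k. \<forall>\<theta>\<in>Mg k \<inter> MF n. \<forall>\<eta>\<in>Mg k \<inter> MF n. (\<lambda>x. \<theta> x + \<eta> x) \<in> MF n) \<and>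
     (\<forall>n\<ge>1. \<forall>k c. \<forall>\<theta>\<in>Mg k \<inter> MF n. (\<lambda>x. scale c (\<theta> x)) \<in> MF n) \<and>
     (\<forall>n\<ge>1. \<forall>k. \<forall>\<theta>\<in>Mg k \<inter> MF n. der_D scale d k \<theta> \<in> MF n) \<and>
     (\<forall>p\<ge>1. \<forall>q\<ge>1. \<forall>k l. \<forall>\<theta>\<in>Mg k \<inter> MF p. \<forall>\<eta>\<in>Mg l \<inter> MF q.
         der_br scale k l \<theta> \<eta> \<in> MF (p + q)) \<and>
     (\<forall>k. filt_complete (Mg k) MF (\<lambda>_. 0)) \<and>
     \<comment> \<open>compatibility with the filtration of L\<close>
     (\<forall>p\<ge>1. \<forall>q\<ge>1. \<forall>k. \<forall>\<theta>\<in>Mg k \<inter> MF p. \<forall>x\<in>F q. \<theta> x \<in> F (p + q))"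

definition MC ::
  "(rat \<Rightarrow> 'a::ab_group_add \<Rightarrow> 'a) \<Rightarrow> ('a \<Rightarrow> 'a) \<Rightarrow> (int \<Rightarrow> ('a \<Rightarrow> 'a) set) \<Rightarrow> ('a \<Rightarrow> 'a) \<Rightarrow> bool" where
  "MC scale d Mg \<delta> \<longleftrightarrow>
     \<delta> \<in> Mg (-1) \<and> der_D scale d (-1) \<delta> = (\<lambda>x. scale (- 1/2) (der_br scale (-1) (-1) \<delta> \<delta> x))"

definition filt_lim :: "'b::minus set \<Rightarrow> (nat \<Rightarrow> 'b set) \<Rightarrow> (nat \<Rightarrow> 'b) \<Rightarrow> 'b \<Rightarrow> bool" where
  "filt_lim V F s y \<longleftrightarrow> y \<in> V \<and> (\<forall>n\<ge>1. \<exists>N. \<forall>k\<ge>N. s k - y \<in> F n)"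

definition filt_Lim :: "'b::minus set \<Rightarrow> (nat \<Rightarrow> 'b set) \<Rightarrow> (nat \<Rightarrow> 'b) \<Rightarrow> 'b" where
  "filt_Lim V F s = (THE y. filt_lim V F s y)"

definition filt_exp ::
  "(rat \<Rightarrow> 'a::ab_group_add \<Rightarrow> 'a) \<Rightarrow> (nat \<Rightarrow> 'a set) \<Rightarrow> ('a \<Rightarrow> 'a) \<Rightarrow> 'a \<Rightarrow> 'a" where
  "filt_exp scale F \<theta> x =
     filt_Lim UNIV F (\<lambda>k. \<Sum>n<k. scale (1 / fact n) ((\<theta> ^^ n) x))"

definition gauge ::
  "(rat \<Rightarrow> 'a::ab_group_add \<Rightarrow> 'a) \<Rightarrow> ('a \<Rightarrow> 'a) \<Rightarrow> (int \<Rightarrow> ('a \<Rightarrow> 'a) set) \<Rightarrow> (nat \<Rightarrow> ('a \<Rightarrow> 'a) set)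
     \<Rightarrow> ('a \<Rightarrow> 'a) \<Rightarrow> ('a \<Rightarrow> 'a) \<Rightarrow> ('a \<Rightarrow> 'a)" where
  "gauge scale d Mg MF x a =
     (let ad = der_br scale 0 (-1) x;
          S1 = filt_Lim (Mg (-1)) MF
                 (\<lambda>k y. \<Sum>i<k. scale (1 / fact i) ((ad ^^ i) a y));
          S2 = filt_Lim (Mg (-1)) MF
                 (\<lambda>k y. \<Sum>i<k. scale (1 / fact (Suc i)) ((ad ^^ i) (der_D scale d 0 x) y))
      in (\<lambda>y. S1 y - S2 y))"

definition gauge_related ::
  "(rat \<Rightarrow> 'a::ab_group_add \<Rightarrow> 'a) \<Rightarrow> ('a \<Rightarrow> 'a) \<Rightarrow> (int \<Rightarrow> ('a \<Rightarrow> 'a) set) \<Rightarrow> (nat \<Rightarrow> ('a \<Rightarrow> 'a) set)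
     \<Rightarrow> ('a \<Rightarrow> 'a) \<Rightarrow> ('a \<Rightarrow> 'a) \<Rightarrow> bool" where
  "gauge_related scale d Mg MF \<delta> \<eta> \<longleftrightarrow> (\<exists>x\<in>Mg 0. gauge scale d Mg MF x \<delta> = \<eta>)"

definition dgl_iso ::
  "(rat \<Rightarrow> 'a::ab_group_add \<Rightarrow> 'a) \<Rightarrow> (int \<Rightarrow> 'a set) \<Rightarrow> ('a \<Rightarrow> 'a \<Rightarrow> 'a)
     \<Rightarrow> ('a \<Rightarrow> 'a) \<Rightarrow> ('a \<Rightarrow> 'a) \<Rightarrow> ('a \<Rightarrow> 'a) \<Rightarrow> bool" where
  "dgl_iso scale Lg br f d1 d2 \<longleftrightarrow>
     bij f \<and> Vector_Spaces.linear scale scale f \<and>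
     (\<forall>n. \<forall>x\<in>Lg n. f x \<in> Lg n) \<and>
     (\<forall>x y. f (br x y) = br (f x) (f y)) \<and>
     (\<forall>x. f (d1 x) = d2 (f x))"

end

theory Submission
  imports Defs
begin

definition lin :: "(rat \<Rightarrow> 'a::ab_group_add \<Rightarrow> 'a) \<Rightarrow> ('a \<Rightarrow> 'a) \<Rightarrow> bool" where
  "lin s f \<longleftrightarrow> (\<forall>x y. f (x + y) = f x + f y) \<and> (\<forall>c x. f (s c x) = s c (f x))"

lemma ag1: "(a::'b::ab_group_add) - (b + c) = (a - (e1 + e2)) - ((b - e1) + (c - e2))"
  by (simp add: algebra_simps)
lemma ag2: "(a::'b::ab_group_add) - u = (a - v) - (u - v)"
  by (simp add: algebra_simps)

locale PS =
  fixes scale :: "rat \<Rightarrow> 'a::ab_group_add \<Rightarrow> 'a"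
    and Lg :: "int \<Rightarrow> 'a set"
    and br :: "'a \<Rightarrow> 'a \<Rightarrow> 'a"
    and d :: "'a \<Rightarrow> 'a"
    and F :: "nat \<Rightarrow> 'a set"
    and Mg :: "int \<Rightarrow> ('a \<Rightarrow> 'a) set"
    and MF :: "nat \<Rightarrow> ('a \<Rightarrow> 'a) set"
  assumes L: "cdgl scale Lg br d F"
    and M: "complete_sub_dgl scale Lg br d F Mg MF"
begin

lemma vs: "vector_space scale"
  using L unfolding cdgl_def dgl_def graded_lie_algebra_def by blast

sublocale vs: vector_space scale by (rule vs)

lemma lin_linear: "lin scale f \<Longrightarrow> Vector_Spaces.linear scale scale f"
  unfolding lin_def Vector_Spaces.linear_iff using vs by blast

lemma linear_lin: "Vector_Spaces.linear scale scale f \<Longrightarrow> lin scale f"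
  unfolding lin_def Vector_Spaces.linear_iff by blast

lemma linD:
  assumes "lin scale f"
  shows "f (x + y) = f x + f y" "f (scale c x) = scale c (f x)" "f 0 = 0" "f (- x) = - f x"
    "f (x - y) = f x - f y" "f (sum g A) = (\<Sum>a\<in>A. f (g a))"
proof -
  interpret h: Vector_Spaces.linear scale scale f using lin_linear[OF assms] .
  show "f (x + y) = f x + f y" "f (scale c x) = scale c (f x)" "f 0 = 0" "f (- x) = - f x"
    "f (x - y) = f x - f y" "f (sum g A) = (\<Sum>a\<in>A. f (g a))"
    by (auto simp: h.add h.scale h.neg h.diff h.sum)
qed

lemma lin_id: "lin scale (\<lambda>x. x)" by (simp add: lin_def)

lemma lin_comp: "lin scale f \<Longrightarrow> lin scale g \<Longrightarrow> lin scale (\<lambda>x. f (g x))"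
  by (simp add: lin_def)

lemma lin_add: "lin scale f \<Longrightarrow> lin scale g \<Longrightarrow> lin scale (\<lambda>x. f x + g x)"
  by (simp add: lin_def vs.scale_right_distrib)

lemma lin_neg: "lin scale f \<Longrightarrow> lin scale (\<lambda>x. - f x)"
  by (simp add: lin_def)

lemma lin_scale: "lin scale f \<Longrightarrow> lin scale (\<lambda>x. scale c (f x))"
  by (simp add: lin_def vs.scale_right_distrib vs.scale_left_commute)

lemma lin_sum: "(\<And>i. i \<in> A \<Longrightarrow> lin scale (f i)) \<Longrightarrow> lin scale (\<lambda>x. \<Sum>i\<in>A. f i x)"
  unfolding lin_def by (auto simp: sum.distrib vs.scale_sum_right)

lemma lin_funpow: "lin scale f \<Longrightarrow> lin scale (f ^^ n)"
  by (induction n) (auto simp: lin_def)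

lemma scale_one': "scale 1 x = x" by simp

lemma gsgn0: "gsgn 0 = 1" by (simp add: gsgn_def)

lemma F1: "F 1 = UNIV" using L by (simp add: cdgl_def)
lemma F_dec: "n \<ge> 1 \<Longrightarrow> F (Suc n) \<subseteq> F n" using L by (simp add: cdgl_def)
lemma F_sub: "n \<ge> 1 \<Longrightarrow> vs.subspace (F n)" using L by (simp add: cdgl_def)
lemma F_gcomp: "n \<ge> 1 \<Longrightarrow> x \<in> F n \<Longrightarrow> gcomp Lg x k \<in> F n" using L by (simp add: cdgl_def)
lemma F_d: "n \<ge> 1 \<Longrightarrow> x \<in> F n \<Longrightarrow> d x \<in> F n" using L by (simp add: cdgl_def)
lemma F_br: "n \<ge> 1 \<Longrightarrow> y \<in> F n \<Longrightarrow> br x y \<in> F n" using L by (simp add: cdgl_def)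
lemma F_br2: "p \<ge> 1 \<Longrightarrow> q \<ge> 1 \<Longrightarrow> x \<in> F p \<Longrightarrow> y \<in> F q \<Longrightarrow> br x y \<in> F (p + q)"
  using L by (simp add: cdgl_def)
lemma Lg_complete: "filt_complete (Lg k) F 0" using L by (simp add: cdgl_def)
lemma gla: "graded_lie_algebra scale Lg br" using L by (simp add: cdgl_def dgl_def)
lemma d_der: "derivation scale Lg br (-1) d" using L by (simp add: cdgl_def dgl_def)
lemma Lg_sub: "vs.subspace (Lg n)" using gla by (simp add: graded_lie_algebra_def)
lemma direct: "direct_graded Lg" using gla by (simp add: graded_lie_algebra_def)
lemma br_lin1: "lin scale (br x)" using gla by (simp add: graded_lie_algebra_def linear_lin)
lemma br_lin2: "lin scale (\<lambda>x. br x y)" using gla by (simp add: graded_lie_algebra_def linear_lin)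
lemma d_lin: "lin scale d" using d_der by (simp add: derivation_def linear_lin)

definition Fi :: "nat \<Rightarrow> 'a set" where "Fi j = F (Suc j)"

lemma Fi0: "Fi 0 = UNIV" by (simp add: Fi_def F1[simplified])
lemma Fi_sub: "vs.subspace (Fi j)" by (simp add: Fi_def F_sub)
lemma Fi_zero: "0 \<in> Fi j" using Fi_sub vs.subspace_0 by blast
lemma Fi_add: "x \<in> Fi j \<Longrightarrow> y \<in> Fi j \<Longrightarrow> x + y \<in> Fi j" using Fi_sub vs.subspace_add by blast
lemma Fi_diff: "x \<in> Fi j \<Longrightarrow> y \<in> Fi j \<Longrightarrow> x - y \<in> Fi j" using Fi_sub vs.subspace_diff by blast
lemma Fi_neg: "x \<in> Fi j \<Longrightarrow> - x \<in> Fi j" using Fi_sub vs.subspace_neg by blast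
lemma Fi_scale: "x \<in> Fi j \<Longrightarrow> scale c x \<in> Fi j" using Fi_sub vs.subspace_scale by blast
lemma Fi_sum: "(\<And>i. i \<in> A \<Longrightarrow> f i \<in> Fi j) \<Longrightarrow> sum f A \<in> Fi j" using Fi_sub vs.subspace_sum by blast
lemma Fi_Suc: "Fi (Suc j) \<subseteq> Fi j" by (simp add: Fi_def F_dec)
lemma Fi_mono: "j \<le> k \<Longrightarrow> Fi k \<subseteq> Fi j"
  by (induction k rule: dec_induct) (use Fi_Suc in auto)
lemma Fi_monoD: "x \<in> Fi k \<Longrightarrow> j \<le> k \<Longrightarrow> x \<in> Fi j" using Fi_mono by blast
lemma Fi_d: "x \<in> Fi j \<Longrightarrow> d x \<in> Fi j" by (simp add: Fi_def F_d)
lemma Fi_br_r: "y \<in> Fi j \<Longrightarrow> br x y \<in> Fi j" by (simp add: Fi_def F_br)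
lemma Fi_br2: "x \<in> Fi a \<Longrightarrow> y \<in> Fi b \<Longrightarrow> br x y \<in> Fi (a + b)"
proof -
  assume "x \<in> Fi a" "y \<in> Fi b"
  hence "br x y \<in> F (Suc a + Suc b)" unfolding Fi_def by (intro F_br2) auto
  thus ?thesis using Fi_mono[of "a + b" "Suc (a + b)"] unfolding Fi_def by auto
qed
lemma Fi_br_l: "x \<in> Fi j \<Longrightarrow> br x y \<in> Fi j"
  using Fi_br2[of x j y 0] Fi0 by auto
lemma Fi_eq: "(\<And>j. a - b \<in> Fi j) \<Longrightarrow> a = b"
proof -
  assume H: "\<And>j. a - b \<in> Fi j"
  have Fn: "a - b \<in> F n" if "n \<ge> 1" for n
    using H[of "n - 1"] that by (simp add: Fi_def)
  obtain c where c: "(\<forall>n. c n \<in> Lg n) \<and> finite {n. c n \<noteq> 0} \<and> a - b = (\<Sum>n\<in>{n. c n \<noteq> 0}. c n)"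
    and cu: "\<And>c'. (\<forall>n. c' n \<in> Lg n) \<and> finite {n. c' n \<noteq> 0} \<and> a - b = (\<Sum>n\<in>{n. c' n \<noteq> 0}. c' n) \<Longrightarrow> c' = c"
    using direct unfolding direct_graded_def by metis
  have g: "gcomp Lg (a - b) = c" unfolding gcomp_def using c cu by (rule the_equality)
  have "c k = 0" for k
  proof -
    have "\<forall>n\<ge>1. c k \<in> F n" using F_gcomp Fn g by metis
    thus ?thesis using Lg_complete[of k] c unfolding filt_complete_def by blast
  qed
  hence "a - b = 0" using c by simp
  thus ?thesis by simp
qed

lemma decomp: "\<exists>c S. finite S \<and> (\<forall>n. c n \<in> Lg n) \<and> x = sum c S"
  using direct unfolding direct_graded_def by metis

lemma Mg_der: "\<theta> \<in> Mg k \<Longrightarrow> derivation scale Lg br k \<theta>" using M by (simp add: complete_sub_dgl_def)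
lemma Mg_zero: "(\<lambda>_. 0) \<in> Mg k" using M by (simp add: complete_sub_dgl_def)
lemma Mg_add: "\<theta> \<in> Mg k \<Longrightarrow> \<eta> \<in> Mg k \<Longrightarrow> (\<lambda>x. \<theta> x + \<eta> x) \<in> Mg k" using M by (simp add: complete_sub_dgl_def)
lemma Mg_scale: "\<theta> \<in> Mg k \<Longrightarrow> (\<lambda>x. scale c (\<theta> x)) \<in> Mg k" using M by (simp add: complete_sub_dgl_def)
lemma Mg_br: "\<theta> \<in> Mg k \<Longrightarrow> \<eta> \<in> Mg l \<Longrightarrow> der_br scale k l \<theta> \<eta> \<in> Mg (k + l)" using M by (simp add: complete_sub_dgl_def)
lemma Mg_D: "\<theta> \<in> Mg k \<Longrightarrow> der_D scale d k \<theta> \<in> Mg (k - 1)" using M by (simp add: complete_sub_dgl_def)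
lemma Mg_MF1: "\<theta> \<in> Mg k \<Longrightarrow> \<theta> \<in> MF 1" using M by (auto simp: complete_sub_dgl_def)
lemma MF_dec: "n \<ge> 1 \<Longrightarrow> MF (Suc n) \<subseteq> MF n" using M by (simp add: complete_sub_dgl_def)
lemma MF_add: "n \<ge> 1 \<Longrightarrow> \<theta> \<in> Mg k \<Longrightarrow> \<theta> \<in> MF n \<Longrightarrow> \<eta> \<in> Mg k \<Longrightarrow> \<eta> \<in> MF n \<Longrightarrow> (\<lambda>x. \<theta> x + \<eta> x) \<in> MF n"
  using M by (simp add: complete_sub_dgl_def)
lemma MF_scale: "n \<ge> 1 \<Longrightarrow> \<theta> \<in> Mg k \<Longrightarrow> \<theta> \<in> MF n \<Longrightarrow> (\<lambda>x. scale c (\<theta> x)) \<in> MF n"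
  using M by (simp add: complete_sub_dgl_def)
lemma MF_br: "p \<ge> 1 \<Longrightarrow> q \<ge> 1 \<Longrightarrow> \<theta> \<in> Mg k \<Longrightarrow> \<theta> \<in> MF p \<Longrightarrow> \<eta> \<in> Mg l \<Longrightarrow> \<eta> \<in> MF q \<Longrightarrow>
   der_br scale k l \<theta> \<eta> \<in> MF (p + q)"
  using M by (simp add: complete_sub_dgl_def)
lemma Mg_complete: "filt_complete (Mg k) MF (\<lambda>_. 0)" using M by (simp add: complete_sub_dgl_def)
lemma compat: "p \<ge> 1 \<Longrightarrow> q \<ge> 1 \<Longrightarrow> \<theta> \<in> Mg k \<Longrightarrow> \<theta> \<in> MF p \<Longrightarrow> x \<in> F q \<Longrightarrow> \<theta> x \<in> F (p + q)"
  using M by (simp add: complete_sub_dgl_def)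

lemma Mg_neg: "\<theta> \<in> Mg k \<Longrightarrow> (\<lambda>x. - \<theta> x) \<in> Mg k"
  using Mg_scale[of \<theta> k "-1"] by simp
lemma Mg_diff: "\<theta> \<in> Mg k \<Longrightarrow> \<eta> \<in> Mg k \<Longrightarrow> \<theta> - \<eta> \<in> Mg k"
proof -
  assume a: "\<theta> \<in> Mg k" "\<eta> \<in> Mg k"
  have "\<theta> - \<eta> = (\<lambda>x. \<theta> x + (- \<eta> x))" by (simp add: fun_diff_def)
  thus ?thesis using Mg_add[OF a(1) Mg_neg[OF a(2)]] by simp
qed
lemma Mg_sum: "(\<And>i. i \<in> A \<Longrightarrow> f i \<in> Mg k) \<Longrightarrow> (\<lambda>x. \<Sum>i\<in>A. f i x) \<in> Mg k"
proof (induction A rule: infinite_finite_induct)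
  case (infinite A) thus ?case using Mg_zero by simp
next
  case empty thus ?case using Mg_zero by simp
next
  case (insert a A) thus ?case using Mg_add[of "f a" k "\<lambda>x. \<Sum>i\<in>A. f i x"] by simp
qed
lemma MF_neg: "n \<ge> 1 \<Longrightarrow> \<theta> \<in> Mg k \<Longrightarrow> \<theta> \<in> MF n \<Longrightarrow> (\<lambda>x. - \<theta> x) \<in> MF n"
  using MF_scale[of n \<theta> k "-1"] by simp
lemma MF_diff: "n \<ge> 1 \<Longrightarrow> \<theta> \<in> Mg k \<Longrightarrow> \<theta> \<in> MF n \<Longrightarrow> \<eta> \<in> Mg k \<Longrightarrow> \<eta> \<in> MF n \<Longrightarrow> \<theta> - \<eta> \<in> MF n"
proof -
  assume a: "n \<ge> 1" "\<theta> \<in> Mg k" "\<theta> \<in> MF n" "\<eta> \<in> Mg k" "\<eta> \<in> MF n"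
  have "\<theta> - \<eta> = (\<lambda>x. \<theta> x + (- \<eta> x))" by (simp add: fun_diff_def)
  thus ?thesis using MF_add[OF a(1,2,3) Mg_neg[OF a(4)] MF_neg[OF a(1,4,5)]] by simp
qed
lemma MF_mono: assumes "1 \<le> n" "n \<le> m" shows "MF m \<subseteq> MF n"
  using assms(2)
proof (induction m rule: dec_induct)
  case base show ?case by simp
next
  case (step m) thus ?case using MF_dec[of m] assms(1) by auto
qed

definition MFi :: "nat \<Rightarrow> ('a \<Rightarrow> 'a) set" where "MFi j = MF (Suc j)"

lemma MFi_mono: "j \<le> k \<Longrightarrow> \<theta> \<in> MFi k \<Longrightarrow> \<theta> \<in> MFi j"
  unfolding MFi_def using MF_mono[of "Suc j" "Suc k"] by auto
lemma MFi_MF: "1 \<le> n \<Longrightarrow> n \<le> j \<Longrightarrow> \<theta> \<in> MFi j \<Longrightarrow> \<theta> \<in> MF n"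
  unfolding MFi_def using MF_mono[of n "Suc j"] by auto
lemma MFi_add: "\<theta> \<in> Mg k \<Longrightarrow> \<theta> \<in> MFi n \<Longrightarrow> \<eta> \<in> Mg k \<Longrightarrow> \<eta> \<in> MFi n \<Longrightarrow> (\<lambda>x. \<theta> x + \<eta> x) \<in> MFi n"
  unfolding MFi_def by (rule MF_add) auto
lemma MFi_scale: "\<theta> \<in> Mg k \<Longrightarrow> \<theta> \<in> MFi n \<Longrightarrow> (\<lambda>x. scale c (\<theta> x)) \<in> MFi n"
  unfolding MFi_def by (rule MF_scale) auto
lemma MFi_neg: "\<theta> \<in> Mg k \<Longrightarrow> \<theta> \<in> MFi n \<Longrightarrow> (\<lambda>x. - \<theta> x) \<in> MFi n"
  unfolding MFi_def by (rule MF_neg) auto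
lemma MFi_diff: "\<theta> \<in> Mg k \<Longrightarrow> \<theta> \<in> MFi n \<Longrightarrow> \<eta> \<in> Mg k \<Longrightarrow> \<eta> \<in> MFi n \<Longrightarrow> \<theta> - \<eta> \<in> MFi n"
  unfolding MFi_def by (rule MF_diff) auto
lemma MFi_zero: "(\<lambda>_. 0) \<in> MFi n"
  using M unfolding MFi_def complete_sub_dgl_def by auto
lemma MFi_sum: "(\<And>i. i \<in> A \<Longrightarrow> f i \<in> Mg k \<and> f i \<in> MFi n) \<Longrightarrow> (\<lambda>x. \<Sum>i\<in>A. f i x) \<in> MFi n"
proof (induction A rule: infinite_finite_induct)
  case (infinite A) thus ?case using MFi_zero by simp
next
  case empty thus ?case using MFi_zero by simp
next
  case (insert a A) thus ?case
    using MFi_add[of "f a" k n "\<lambda>x. \<Sum>i\<in>A. f i x"] Mg_sum[of A f k] by simp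
qed
lemma MFi0: "\<theta> \<in> Mg k \<Longrightarrow> \<theta> \<in> MFi 0" unfolding MFi_def using Mg_MF1 by simp
lemma MFi_br: "\<theta> \<in> Mg k \<Longrightarrow> \<eta> \<in> Mg l \<Longrightarrow> \<eta> \<in> MFi j \<Longrightarrow> der_br scale k l \<theta> \<eta> \<in> MFi (Suc j)"
  unfolding MFi_def using MF_br[of 1 "Suc j" \<theta> k \<eta> l] Mg_MF1 by simp
lemma MFi_pt: "\<theta> \<in> Mg k \<Longrightarrow> \<theta> \<in> MFi j \<Longrightarrow> \<theta> z \<in> Fi j"
proof -
  assume a: "\<theta> \<in> Mg k" "\<theta> \<in> MFi j"
  have "\<theta> z \<in> F (Suc j + 1)" using compat[of "Suc j" 1 \<theta> k z] a F1 unfolding MFi_def by auto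
  hence "\<theta> z \<in> Fi (Suc j)" by (simp add: Fi_def)
  thus ?thesis using Fi_mono[of j "Suc j"] by auto
qed
lemma Mg_Fi: "\<theta> \<in> Mg k \<Longrightarrow> x \<in> Fi j \<Longrightarrow> \<theta> x \<in> Fi (Suc j)"
  using compat[of 1 "Suc j" \<theta> k x] Mg_MF1 unfolding Fi_def by simp
lemma Mg_lin: "\<theta> \<in> Mg k \<Longrightarrow> lin scale \<theta>"
  using Mg_der by (simp add: derivation_def linear_lin)

lemma M_lim:
  assumes s: "\<And>m. s m \<in> Mg k" and c: "\<And>j m. j \<le> m \<Longrightarrow> s m - s j \<in> MFi j"
  shows "filt_Lim (Mg k) MF s \<in> Mg k \<and> (\<forall>j. filt_Lim (Mg k) MF s - s j \<in> MFi j)"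
proof -
  have "\<forall>n m. 1 \<le> n \<longrightarrow> n \<le> m \<longrightarrow> s m - s n \<in> MF n"
    using c MFi_MF by blast
  then obtain y where y: "y \<in> Mg k" "\<And>n. n \<ge> 1 \<Longrightarrow> y - s n \<in> MF n"
    using Mg_complete[of k] s unfolding filt_complete_def by blast
  have yj: "y - s j \<in> MFi j" for j
  proof -
    have 1: "y - s (Suc j) \<in> MFi j" using y(2)[of "Suc j"] by (simp add: MFi_def)
    have 2: "s (Suc j) - s j \<in> MFi j" using c by simp
    have "y - s j = (\<lambda>x. (y - s (Suc j)) x + (s (Suc j) - s j) x)" by (simp add: fun_diff_def)
    thus ?thesis using MFi_add[OF Mg_diff[OF y(1) s] 1 Mg_diff[OF s s] 2] by simp
  qed
  have ysk: "s kk - y \<in> MF n" if "1 \<le> n" "n \<le> kk" for n kk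
  proof -
    have "s kk - y = (\<lambda>x. - (y - s kk) x)" by (simp add: fun_diff_def)
    thus ?thesis using MFi_neg[OF Mg_diff[OF y(1) s] yj[of kk]] MFi_MF[OF that] by (simp add: MFi_def)
  qed
  have lim: "filt_lim (Mg k) MF s y" unfolding filt_lim_def using y(1) ysk by blast
  have uniq: "y' = y" if "filt_lim (Mg k) MF s y'" for y'
  proof -
    have y': "y' \<in> Mg k" using that by (simp add: filt_lim_def)
    have "y - y' \<in> MF n" if n: "n \<ge> 1" for n
    proof -
      obtain N where N: "\<forall>kk\<ge>N. s kk - y' \<in> MF n" using \<open>filt_lim (Mg k) MF s y'\<close> n unfolding filt_lim_def by blast
      define kk where "kk = max N n"
      have a: "s kk - y' \<in> MF n" using N by (simp add: kk_def)
      have b: "s kk - y \<in> MF n" using ysk n by (simp add: kk_def)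
      have "y - y' = (s kk - y') - (s kk - y)" by (simp add: fun_eq_iff)
      thus ?thesis using MF_diff[OF n Mg_diff[OF s y'] a Mg_diff[OF s y(1)] b] by simp
    qed
    hence "y - y' = (\<lambda>_. 0)" using Mg_complete[of k] Mg_diff[OF y(1) y'] unfolding filt_complete_def by blast
    thus ?thesis by (simp add: fun_diff_def fun_eq_iff)
  qed
  have "filt_Lim (Mg k) MF s = y" unfolding filt_Lim_def using lim uniq by (rule the_equality)
  thus ?thesis using y(1) yj by simp
qed

definition good :: "('a \<Rightarrow> 'a) \<Rightarrow> bool" where
  "good \<theta> \<longleftrightarrow> lin scale \<theta> \<and> (\<forall>j x. x \<in> Fi j \<longrightarrow> \<theta> x \<in> Fi (Suc j)) \<and>
     (\<forall>n x. x \<in> Lg n \<longrightarrow> \<theta> x \<in> Lg n) \<and> (\<forall>x y. \<theta> (br x y) = br (\<theta> x) y + br x (\<theta> y))"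

lemma goodD:
  assumes "good \<theta>"
  shows "lin scale \<theta>" "x \<in> Fi j \<Longrightarrow> \<theta> x \<in> Fi (Suc j)" "x \<in> Lg n \<Longrightarrow> \<theta> x \<in> Lg n"
    "\<theta> (br x y) = br (\<theta> x) y + br x (\<theta> y)"
  using assms unfolding good_def by blast+

lemma Mg0_good:
  assumes "\<theta> \<in> Mg 0" shows "good \<theta>"
proof -
  have der: "derivation scale Lg br 0 \<theta>" using Mg_der[OF assms] .
  have l: "lin scale \<theta>" using Mg_lin[OF assms] .
  have lg: "x \<in> Lg n \<Longrightarrow> \<theta> x \<in> Lg n" for x n using der unfolding derivation_def by force
  have hom: "\<theta> (br x y) = br (\<theta> x) y + br x (\<theta> y)" if "x \<in> Lg p" for x y p
    using der that unfolding derivation_def by (simp add: gsgn0)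
  have "\<theta> (br x y) = br (\<theta> x) y + br x (\<theta> y)" for x y
  proof -
    obtain c S where c: "finite S" "\<forall>n. c n \<in> Lg n" "x = sum c S" using decomp by blast
    have e1: "br x y = (\<Sum>n\<in>S. br (c n) y)" by (simp add: c(3) linD(6)[OF br_lin2[of y]])
    have "\<theta> (br x y) = (\<Sum>n\<in>S. \<theta> (br (c n) y))"
      by (simp only: e1 linD(6)[OF l])
    also have "\<dots> = (\<Sum>n\<in>S. br (\<theta> (c n)) y + br (c n) (\<theta> y))"
      using hom c(2) by (intro sum.cong refl) blast
    also have "\<dots> = br (\<theta> x) y + br x (\<theta> y)"
    proof -
      have e2: "br (\<theta> x) y = (\<Sum>n\<in>S. br (\<theta> (c n)) y)"
        by (simp only: c(3) linD(6)[OF l] linD(6)[OF br_lin2[of y]])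
      have e3: "br x (\<theta> y) = (\<Sum>n\<in>S. br (c n) (\<theta> y))"
        by (simp only: c(3) linD(6)[OF br_lin2[of "\<theta> y"]])
      show ?thesis by (simp only: e2 e3 sum.distrib)
    qed
    finally show ?thesis .
  qed
  thus ?thesis unfolding good_def using l lg Mg_Fi[OF assms] by blast
qed

lemma good_neg: "good \<theta> \<Longrightarrow> good (\<lambda>x. - \<theta> x)"
  unfolding good_def using lin_neg Fi_neg vs.subspace_neg[OF Lg_sub]
    linD(4)[OF br_lin1] linD(4)[OF br_lin2] by auto

lemma pow_Fi: "good \<theta> \<Longrightarrow> x \<in> Fi j \<Longrightarrow> (\<theta> ^^ n) x \<in> Fi (j + n)"
  by (induction n) (auto dest: goodD(2))

lemma pow_Lg: "good \<theta> \<Longrightarrow> x \<in> Lg m \<Longrightarrow> (\<theta> ^^ n) x \<in> Lg m"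
  by (induction n) (auto dest: goodD(3))

lemma pow_lin: "good \<theta> \<Longrightarrow> lin scale (\<theta> ^^ n)"
  using lin_funpow goodD(1) by blast

definition Esum :: "('a \<Rightarrow> 'a) \<Rightarrow> nat \<Rightarrow> 'a \<Rightarrow> 'a" where
  "Esum \<theta> k x = (\<Sum>n<k. scale (1 / fact n) ((\<theta> ^^ n) x))"

lemma E_lin: "good \<theta> \<Longrightarrow> lin scale (Esum \<theta> k)"
  unfolding Esum_def[abs_def] by (intro lin_sum lin_scale pow_lin)

lemma E_Fi: assumes g: "good \<theta>" and x: "x \<in> Fi j" shows "Esum \<theta> k x \<in> Fi j"
proof -
  have "(\<theta> ^^ n) x \<in> Fi j" for n using Fi_monoD[OF pow_Fi[OF g x, of n]] by simp
  thus ?thesis unfolding Esum_def by (intro Fi_sum Fi_scale)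
qed

lemma E_Lg: "good \<theta> \<Longrightarrow> x \<in> Lg m \<Longrightarrow> Esum \<theta> k x \<in> Lg m"
  unfolding Esum_def by (intro vs.subspace_sum[OF Lg_sub] vs.subspace_scale[OF Lg_sub] pow_Lg)

lemma E_cauchy:
  assumes g: "good \<theta>" and jm: "j \<le> m" shows "Esum \<theta> m x - Esum \<theta> j x \<in> Fi j"
  using jm
proof (induction m rule: dec_induct)
  case base thus ?case using Fi_zero by simp
next
  case (step n)
  have "(\<theta> ^^ n) x \<in> Fi n" using pow_Fi[OF g, of x 0 n] Fi0 by simp
  hence t: "scale (1 / fact n) ((\<theta> ^^ n) x) \<in> Fi j"
    using Fi_monoD[of _ n j] step(1) Fi_scale by blast
  have eq: "Esum \<theta> (Suc n) x - Esum \<theta> j x = (Esum \<theta> n x - Esum \<theta> j x) + scale (1 / fact n) ((\<theta> ^^ n) x)"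
    by (simp add: Esum_def)
  show ?case unfolding eq by (rule Fi_add[OF step(3) t])
qed

lemma E_lim_Lg:
  assumes g: "good \<theta>" and x: "x \<in> Lg m"
  shows "\<exists>y\<in>Lg m. \<forall>k. y - Esum \<theta> k x \<in> Fi k"
proof -
  have "\<forall>n m'. 1 \<le> n \<longrightarrow> n \<le> m' \<longrightarrow> Esum \<theta> m' x - Esum \<theta> n x \<in> F n"
  proof (intro allI impI)
    fix n m' :: nat assume a: "1 \<le> n" "n \<le> m'"
    have "Esum \<theta> m' x - Esum \<theta> n x \<in> Fi n" by (rule E_cauchy[OF g a(2)])
    thus "Esum \<theta> m' x - Esum \<theta> n x \<in> F n" using F_dec[OF a(1)] unfolding Fi_def by blast
  qed
  moreover have "\<forall>n. Esum \<theta> n x \<in> Lg m" using E_Lg[OF g x] by blast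
  moreover have "\<forall>s. (\<forall>n. s n \<in> Lg m) \<longrightarrow> (\<forall>n m'. 1 \<le> n \<longrightarrow> n \<le> m' \<longrightarrow> s m' - s n \<in> F n) \<longrightarrow>
          (\<exists>y\<in>Lg m. \<forall>n\<ge>1. y - s n \<in> F n)"
    using Lg_complete[of m] unfolding filt_complete_def by (elim conjE)
  ultimately have "\<exists>y\<in>Lg m. \<forall>n\<ge>1. y - Esum \<theta> n x \<in> F n"
    by (elim allE[where x = "\<lambda>n. Esum \<theta> n x"]) (elim impE; assumption)
  then obtain y where y: "y \<in> Lg m" "\<And>n. n \<ge> 1 \<Longrightarrow> y - Esum \<theta> n x \<in> F n"
    by blast
  have "y - Esum \<theta> k x \<in> Fi k" for k
  proof -
    have 1: "y - Esum \<theta> (Suc k) x \<in> Fi k" using y(2)[of "Suc k"] by (simp add: Fi_def)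
    have 2: "Esum \<theta> (Suc k) x - Esum \<theta> k x \<in> Fi k" using E_cauchy[OF g] by simp
    show ?thesis using Fi_add[OF 1 2] by simp
  qed
  thus ?thesis using y(1) by blast
qed

lemma E_lim:
  assumes g: "good \<theta>" shows "\<exists>y. \<forall>k. y - Esum \<theta> k x \<in> Fi k"
proof -
  obtain c S where c: "finite S" "\<forall>n. c n \<in> Lg n" "x = sum c S" using decomp by blast
  have "\<forall>n. \<exists>y. \<forall>k. y - Esum \<theta> k (c n) \<in> Fi k"
  proof
    fix n
    obtain y where "y \<in> Lg n" "\<forall>k. y - Esum \<theta> k (c n) \<in> Fi k" using E_lim_Lg[OF g, of "c n" n] c(2) by blast
    thus "\<exists>y. \<forall>k. y - Esum \<theta> k (c n) \<in> Fi k" by blast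
  qed
  from choice[OF this] obtain yy where yy: "\<And>n k. yy n - Esum \<theta> k (c n) \<in> Fi k" by blast
  have "(\<Sum>n\<in>S. yy n) - Esum \<theta> k x \<in> Fi k" for k
  proof -
    have eq: "(\<Sum>n\<in>S. yy n) - Esum \<theta> k x = (\<Sum>n\<in>S. yy n - Esum \<theta> k (c n))"
      unfolding c(3) linD(6)[OF E_lin[OF g]] by (rule sum_subtractf[symmetric])
    have "(\<Sum>n\<in>S. yy n - Esum \<theta> k (c n)) \<in> Fi k" by (rule Fi_sum) (rule yy)
    thus ?thesis unfolding eq .
  qed
  thus ?thesis by (intro exI allI)
qed

lemma exp_char: assumes g: "good \<theta>" shows "filt_exp scale F \<theta> x - Esum \<theta> k x \<in> Fi k"
proof -
  obtain y where y: "\<And>k. y - Esum \<theta> k x \<in> Fi k" using E_lim[OF g] by blast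
  let ?s = "\<lambda>k. \<Sum>n<k. scale (1 / fact n) ((\<theta> ^^ n) x)"
  have s: "?s k = Esum \<theta> k x" for k by (simp add: Esum_def)
  have sy: "?s kk - y \<in> Fi j" if "j \<le> kk" for kk j
  proof -
    have "- (y - Esum \<theta> kk x) \<in> Fi kk" by (rule Fi_neg[OF y])
    hence "Esum \<theta> kk x - y \<in> Fi kk" by simp
    hence "Esum \<theta> kk x - y \<in> Fi j" by (rule Fi_monoD[OF _ that])
    thus ?thesis by (simp only: s)
  qed
  have lim: "filt_lim UNIV F ?s y" unfolding filt_lim_def
  proof (intro conjI allI impI)
    fix n :: nat assume n: "1 \<le> n"
    have "\<forall>kk\<ge>n. ?s kk - y \<in> F n"
    proof (intro allI impI)
      fix kk assume "n \<le> kk"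
      hence "?s kk - y \<in> Fi (n - 1)" using sy[of "n - 1" kk] by simp
      thus "?s kk - y \<in> F n" using n by (simp add: Fi_def)
    qed
    thus "\<exists>N. \<forall>kk\<ge>N. ?s kk - y \<in> F n" by blast
  qed simp
  have uniq: "y' = y" if "filt_lim UNIV F ?s y'" for y'
  proof (rule Fi_eq)
    fix j
    have "\<exists>N. \<forall>kk\<ge>N. ?s kk - y' \<in> F (Suc j)" using that unfolding filt_lim_def by simp
    then obtain N where N: "\<forall>kk\<ge>N. ?s kk - y' \<in> F (Suc j)" by blast
    define kk where "kk = max N j"
    have "N \<le> kk" "j \<le> kk" by (simp_all add: kk_def)
    have a: "?s kk - y' \<in> Fi j" using N[rule_format, OF \<open>N \<le> kk\<close>] by (simp only: Fi_def)
    have b: "?s kk - y \<in> Fi j" by (rule sy[OF \<open>j \<le> kk\<close>])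
    have "y' - y = (?s kk - y) - (?s kk - y')" by simp
    thus "y' - y \<in> Fi j" using Fi_diff[OF b a] by simp
  qed
  have "filt_exp scale F \<theta> x = y" unfolding filt_exp_def filt_Lim_def using lim uniq by (rule the_equality)
  thus ?thesis using y by simp
qed

lemma exp_eq: "good \<theta> \<Longrightarrow> (\<And>k. y - Esum \<theta> k x \<in> Fi k) \<Longrightarrow> filt_exp scale F \<theta> x = y"
proof -
  assume g: "good \<theta>" and y: "\<And>k. y - Esum \<theta> k x \<in> Fi k"
  show ?thesis
  proof (rule Fi_eq)
    fix j
    have "filt_exp scale F \<theta> x - y = (filt_exp scale F \<theta> x - Esum \<theta> j x) - (y - Esum \<theta> j x)" by simp
    thus "filt_exp scale F \<theta> x - y \<in> Fi j" using Fi_diff[OF exp_char[OF g, of x j] y[of j]] by simp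
  qed
qed

lemma exp_Lg: "good \<theta> \<Longrightarrow> x \<in> Lg m \<Longrightarrow> filt_exp scale F \<theta> x \<in> Lg m"
proof -
  assume g: "good \<theta>" and x: "x \<in> Lg m"
  obtain y where y: "y \<in> Lg m" "\<And>k. y - Esum \<theta> k x \<in> Fi k" using E_lim_Lg[OF g x] by blast
  have "filt_exp scale F \<theta> x = y" by (rule exp_eq[OF g y(2)])
  thus ?thesis using y(1) by simp
qed

lemma exp_Fi: "good \<theta> \<Longrightarrow> x \<in> Fi j \<Longrightarrow> filt_exp scale F \<theta> x \<in> Fi j"
proof -
  assume g: "good \<theta>" and x: "x \<in> Fi j"
  show ?thesis using Fi_add[OF exp_char[OF g, of x j] E_Fi[OF g x, of j]] by simp
qed

lemma exp_lin: assumes g: "good \<theta>" shows "lin scale (filt_exp scale F \<theta>)"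
proof -
  let ?e = "filt_exp scale F \<theta>"
  have "?e (x + y) = ?e x + ?e y" for x y
  proof (rule Fi_eq)
    fix j
    have eq: "?e (x + y) - (?e x + ?e y) = (?e (x + y) - Esum \<theta> j (x + y)) - ((?e x - Esum \<theta> j x) + (?e y - Esum \<theta> j y))"
      unfolding linD(1)[OF E_lin[OF g]] by (rule ag1)
    show "?e (x + y) - (?e x + ?e y) \<in> Fi j" unfolding eq
      using Fi_diff[OF exp_char[OF g, of "x + y" j] Fi_add[OF exp_char[OF g, of x j] exp_char[OF g, of y j]]] by simp
  qed
  moreover have "?e (scale c x) = scale c (?e x)" for c x
  proof (rule Fi_eq)
    fix j
    have eq: "?e (scale c x) - scale c (?e x) = (?e (scale c x) - Esum \<theta> j (scale c x)) - scale c (?e x - Esum \<theta> j x)"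
      unfolding linD(2)[OF E_lin[OF g]] vs.scale_right_diff_distrib by (rule ag2)
    show "?e (scale c x) - scale c (?e x) \<in> Fi j" unfolding eq
      using Fi_diff[OF exp_char[OF g, of "scale c x" j] Fi_scale[OF exp_char[OF g, of x j]]] by simp
  qed
  ultimately show ?thesis by (simp add: lin_def)
qed

end


context PS begin

lemma pascal:
  "(\<Sum>k\<le>Suc n. scale (of_nat (Suc n choose k)) (T k (Suc n - k))) =
   (\<Sum>k\<le>n. scale (of_nat (n choose k)) (T (Suc k) (n - k))) +
   (\<Sum>k\<le>n. scale (of_nat (n choose k)) (T k (Suc (n - k))))"
proof -
  have L: "(\<Sum>k\<le>Suc n. scale (of_nat (Suc n choose k)) (T k (Suc n - k))) =
     T 0 (Suc n) + (\<Sum>k\<le>n. scale (of_nat (n choose k)) (T (Suc k) (n - k)))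
      + (\<Sum>k\<le>n. scale (of_nat (n choose Suc k)) (T (Suc k) (n - k)))"
    unfolding sum.atMost_Suc_shift by (simp add: vs.scale_left_distrib sum.distrib add.assoc)
  have X1: "(\<Sum>k\<le>Suc n. scale (of_nat (n choose k)) (T k (Suc n - k))) =
      (\<Sum>k\<le>n. scale (of_nat (n choose k)) (T k (Suc (n - k))))"
    by (simp add: sum.atMost_Suc Suc_diff_le)
  have X2: "(\<Sum>k\<le>Suc n. scale (of_nat (n choose k)) (T k (Suc n - k))) =
      T 0 (Suc n) + (\<Sum>k\<le>n. scale (of_nat (n choose Suc k)) (T (Suc k) (n - k)))"
    unfolding sum.atMost_Suc_shift by simp
  show ?thesis using L X1 X2 by (simp add: algebra_simps)
qed

lemma tri:
  assumes g: "\<And>k j. g k j \<in> Fi (k + j)"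
  shows "(\<Sum>k<N. \<Sum>j<N. g k j) - (\<Sum>n<N. \<Sum>k\<le>n. g k (n - k)) \<in> Fi N"
proof -
  let ?A = "{..<N} \<times> {..<N}" and ?B = "{(k, j). k + j < N}"
  have 1: "(\<Sum>n<N. \<Sum>k\<le>n. g k (n - k)) = (\<Sum>(k, j)\<in>?B. g k j)"
    by (rule sum.triangle_reindex[symmetric])
  have 2: "(\<Sum>k<N. \<Sum>j<N. g k j) = (\<Sum>(k, j)\<in>?A. g k j)"
    by (simp add: sum.cartesian_product)
  have sub: "?B \<subseteq> ?A" by auto
  have 3: "(\<Sum>(k, j)\<in>?A. g k j) = (\<Sum>(k, j)\<in>?A - ?B. g k j) + (\<Sum>(k, j)\<in>?B. g k j)"
    by (rule sum.subset_diff[OF sub]) simp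
  have 4: "(\<Sum>(k, j)\<in>?A - ?B. g k j) \<in> Fi N"
  proof (rule Fi_sum)
    fix p assume "p \<in> ?A - ?B"
    then obtain k j where p: "p = (k, j)" "N \<le> k + j" by auto
    show "(case p of (k, j) \<Rightarrow> g k j) \<in> Fi N" using p Fi_monoD[OF g[of k j]] by simp
  qed
  show ?thesis using 4 unfolding 1 2 3 by simp
qed

lemma leib:
  assumes g: "good \<theta>"
  shows "(\<theta> ^^ n) (br x y) = (\<Sum>k\<le>n. scale (of_nat (n choose k)) (br ((\<theta> ^^ k) x) ((\<theta> ^^ (n - k)) y)))"
proof (induction n)
  case 0 thus ?case by simp
next
  case (Suc n)
  let ?T = "\<lambda>k j. br ((\<theta> ^^ k) x) ((\<theta> ^^ j) y)"
  have "(\<theta> ^^ Suc n) (br x y) = \<theta> ((\<theta> ^^ n) (br x y))" by simp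
  also have "\<dots> = (\<Sum>k\<le>n. scale (of_nat (n choose k)) (\<theta> (?T k (n - k))))"
    unfolding Suc by (simp add: linD(6)[OF goodD(1)[OF g]] linD(2)[OF goodD(1)[OF g]])
  also have "\<dots> = (\<Sum>k\<le>n. scale (of_nat (n choose k)) (?T (Suc k) (n - k))) +
     (\<Sum>k\<le>n. scale (of_nat (n choose k)) (?T k (Suc (n - k))))"
    by (simp add: goodD(4)[OF g] vs.scale_right_distrib sum.distrib)
  also have "\<dots> = (\<Sum>k\<le>Suc n. scale (of_nat (Suc n choose k)) (?T k (Suc n - k)))"
    by (rule pascal[symmetric])
  finally show ?case .
qed

definition adj :: "('a \<Rightarrow> 'a) \<Rightarrow> ('a \<Rightarrow> 'a) \<Rightarrow> ('a \<Rightarrow> 'a)" where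
  "adj \<theta> \<phi> = (\<lambda>y. \<theta> (\<phi> y) - \<phi> (\<theta> y))"

lemma ad_binom:
  assumes g: "good \<theta>" and l: "lin scale \<phi>"
  shows "(adj \<theta> ^^ n) \<phi> z = (\<Sum>k\<le>n. scale (of_nat (n choose k)) ((\<theta> ^^ k) (\<phi> (((\<lambda>x. - \<theta> x) ^^ (n - k)) z))))"
proof (induction n arbitrary: z)
  case 0 thus ?case by simp
next
  case (Suc n)
  let ?t = "\<lambda>x. - \<theta> x"
  let ?T = "\<lambda>k j. (\<theta> ^^ k) (\<phi> ((?t ^^ j) z))"
  have lt: "lin scale (\<theta> ^^ k)" for k using pow_lin[OF g] .
  have lt': "lin scale (?t ^^ k)" for k using pow_lin[OF good_neg[OF g]] .
  have sw: "- ((\<theta> ^^ k) (\<phi> ((?t ^^ m) (\<theta> z)))) = ?T k (Suc m)" for k m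
  proof -
    have "(?t ^^ Suc m) z = (?t ^^ m) (- \<theta> z)" by (simp add: funpow_Suc_right del: funpow.simps)
    also have "\<dots> = - ((?t ^^ m) (\<theta> z))" using linD(4)[OF lt'] .
    finally show ?thesis using linD(4)[OF lt] linD(4)[OF l] by simp
  qed
  have "(adj \<theta> ^^ Suc n) \<phi> z = \<theta> ((adj \<theta> ^^ n) \<phi> z) + (- (adj \<theta> ^^ n) \<phi> (\<theta> z))"
    by (simp add: adj_def)
  also have "\<theta> ((adj \<theta> ^^ n) \<phi> z) = (\<Sum>k\<le>n. scale (of_nat (n choose k)) (?T (Suc k) (n - k)))"
    unfolding Suc by (simp add: linD(6)[OF goodD(1)[OF g]] linD(2)[OF goodD(1)[OF g]])
  also have "- (adj \<theta> ^^ n) \<phi> (\<theta> z) = (\<Sum>k\<le>n. scale (of_nat (n choose k)) (?T k (Suc (n - k))))"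
  proof -
    have "- (adj \<theta> ^^ n) \<phi> (\<theta> z) = - (\<Sum>k\<le>n. scale (of_nat (n choose k)) ((\<theta> ^^ k) (\<phi> ((?t ^^ (n - k)) (\<theta> z)))))"
      by (simp only: Suc)
    also have "\<dots> = (\<Sum>k\<le>n. scale (of_nat (n choose k)) (- ((\<theta> ^^ k) (\<phi> ((?t ^^ (n - k)) (\<theta> z))))))"
      by (simp add: sum_negf del: funpow.simps)
    also have "\<dots> = (\<Sum>k\<le>n. scale (of_nat (n choose k)) (?T k (Suc (n - k))))"
      by (simp only: sw)
    finally show ?thesis .
  qed
  also have "(\<Sum>k\<le>n. scale (of_nat (n choose k)) (?T (Suc k) (n - k))) +
     (\<Sum>k\<le>n. scale (of_nat (n choose k)) (?T k (Suc (n - k)))) =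
     (\<Sum>k\<le>Suc n. scale (of_nat (Suc n choose k)) (?T k (Suc n - k)))"
    by (rule pascal[symmetric])
  finally show ?case .
qed

lemma binom_coef:
  assumes "k \<le> n"
  shows "(1 / fact n) * (of_nat (n choose k) :: rat) = (1 / fact k) * (1 / fact (n - k))"
  using binomial_fact[OF assms, where 'a = rat] by (simp add: field_simps)

lemma exp_double:
  assumes T: "\<And>k j. T k j \<in> Fi (k + j)"
  shows "(\<Sum>k<N. \<Sum>j<N. scale (1 / fact k) (scale (1 / fact j) (T k j))) -
     (\<Sum>n<N. scale (1 / fact n) (\<Sum>k\<le>n. scale (of_nat (n choose k)) (T k (n - k)))) \<in> Fi N"
proof -
  have e: "scale (1 / fact n) (\<Sum>k\<le>n. scale (of_nat (n choose k)) (T k (n - k))) =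
     (\<Sum>k\<le>n. scale (1 / fact k) (scale (1 / fact (n - k)) (T k (n - k))))" for n
  proof -
    have "scale (1 / fact n) (\<Sum>k\<le>n. scale (of_nat (n choose k)) (T k (n - k))) =
       (\<Sum>k\<le>n. scale (1 / fact n) (scale (of_nat (n choose k)) (T k (n - k))))"
      by (rule vs.scale_sum_right)
    also have "\<dots> = (\<Sum>k\<le>n. scale (1 / fact k) (scale (1 / fact (n - k)) (T k (n - k))))"
    proof (intro sum.cong refl)
      fix k assume "k \<in> {..n}"
      hence kn: "k \<le> n" by simp
      show "scale (1 / fact n) (scale (of_nat (n choose k)) (T k (n - k))) =
          scale (1 / fact k) (scale (1 / fact (n - k)) (T k (n - k)))"
        by (simp only: vs.scale_scale binom_coef[OF kn])
    qed
    finally show ?thesis .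
  qed
  show ?thesis unfolding e by (rule tri) (intro Fi_scale T)
qed

lemma br_E:
  "br (Esum \<theta> N x) (Esum \<theta> N y) =
   (\<Sum>k<N. \<Sum>j<N. scale (1 / fact k) (scale (1 / fact j) (br ((\<theta> ^^ k) x) ((\<theta> ^^ j) y))))"
  unfolding Esum_def
  apply (simp add: linD(6)[OF br_lin2] linD(2)[OF br_lin2] linD(6)[OF br_lin1] linD(2)[OF br_lin1]
      vs.scale_sum_right)
  apply (subst sum.swap)
  apply (simp add: ac_simps)
  done

lemma exp_br:
  assumes g: "good \<theta>"
  shows "filt_exp scale F \<theta> (br x y) = br (filt_exp scale F \<theta> x) (filt_exp scale F \<theta> y)"
proof (rule Fi_eq)
  fix N
  let ?e = "filt_exp scale F \<theta>"
  let ?T = "\<lambda>k j. br ((\<theta> ^^ k) x) ((\<theta> ^^ j) y)"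
  let ?D1 = "Esum \<theta> N (br x y)"
  let ?D2 = "br (Esum \<theta> N x) (Esum \<theta> N y)"
  have T: "?T k j \<in> Fi (k + j)" for k j
    using Fi_br2[OF pow_Fi[OF g, of x 0 k] pow_Fi[OF g, of y 0 j]] Fi0 by simp
  have D1: "?D1 = (\<Sum>n<N. scale (1 / fact n) (\<Sum>k\<le>n. scale (of_nat (n choose k)) (?T k (n - k))))"
    unfolding Esum_def leib[OF g] ..
  have 1: "?e (br x y) - ?D1 \<in> Fi N" by (rule exp_char[OF g])
  have 2: "?D2 - ?D1 \<in> Fi N" unfolding D1 br_E by (rule exp_double[OF T])
  have 3: "br (?e x) (?e y) - ?D2 \<in> Fi N"
  proof -
    have eq: "br (?e x) (?e y) - ?D2 = br (?e x - Esum \<theta> N x) (?e y) + br (Esum \<theta> N x) (?e y - Esum \<theta> N y)"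
      by (simp add: linD(5)[OF br_lin2] linD(5)[OF br_lin1])
    show ?thesis unfolding eq
      by (intro Fi_add Fi_br_l Fi_br_r exp_char[OF g])
  qed
  have eq: "?e (br x y) - br (?e x) (?e y) = (?e (br x y) - ?D1) - (?D2 - ?D1) - (br (?e x) (?e y) - ?D2)"
    by (simp add: algebra_simps)
  show "?e (br x y) - br (?e x) (?e y) \<in> Fi N" unfolding eq
    by (intro Fi_diff 1 2 3)
qed

lemma adj_apply: "adj \<theta> \<phi> y = \<theta> (\<phi> y) - \<phi> (\<theta> y)"
  by (simp add: adj_def)

lemma ad_add:
  assumes l: "lin scale \<theta>"
  shows "(adj \<theta> ^^ n) (\<lambda>y. f y + g y) = (\<lambda>y. (adj \<theta> ^^ n) f y + (adj \<theta> ^^ n) g y)"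
proof (induction n)
  case 0 thus ?case by simp
next
  case (Suc n) thus ?case by (simp add: adj_def linD(1)[OF l] algebra_simps)
qed

lemma ad_neg:
  assumes l: "lin scale \<theta>"
  shows "(adj \<theta> ^^ n) (\<lambda>y. - f y) = (\<lambda>y. - (adj \<theta> ^^ n) f y)"
proof (induction n)
  case 0 thus ?case by simp
next
  case (Suc n) thus ?case by (simp add: adj_def linD(4)[OF l] algebra_simps)
qed

lemma ad_id:
  assumes l: "lin scale \<theta>"
  shows "(adj \<theta> ^^ Suc n) (\<lambda>x. x) = (\<lambda>_. 0)"
proof (induction n)
  case 0 thus ?case by (simp add: adj_def)
next
  case (Suc n) thus ?case by (simp add: adj_def linD(3)[OF l])
qed

lemma ad_Fi:
  assumes g: "good \<theta>" and p: "\<And>j x. x \<in> Fi j \<Longrightarrow> \<phi> x \<in> Fi j"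
  shows "z \<in> Fi j \<Longrightarrow> (adj \<theta> ^^ n) \<phi> z \<in> Fi (j + n)"
proof (induction n arbitrary: z j)
  case 0 thus ?case using p by simp
next
  case (Suc n)
  have a: "\<theta> ((adj \<theta> ^^ n) \<phi> z) \<in> Fi (j + Suc n)"
    using goodD(2)[OF g Suc.IH[OF Suc.prems]] by simp
  have b: "(adj \<theta> ^^ n) \<phi> (\<theta> z) \<in> Fi (j + Suc n)"
    using Suc.IH[OF goodD(2)[OF g Suc.prems]] by simp
  have eq: "(adj \<theta> ^^ Suc n) \<phi> z = \<theta> ((adj \<theta> ^^ n) \<phi> z) - (adj \<theta> ^^ n) \<phi> (\<theta> z)"
    by (simp only: funpow.simps o_apply adj_apply)
  show ?case unfolding eq using Fi_diff[OF a b] .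
qed

lemma conj_approx:
  assumes g: "good \<theta>" and l: "lin scale \<phi>" and p: "\<And>j x. x \<in> Fi j \<Longrightarrow> \<phi> x \<in> Fi j"
  shows "filt_exp scale F \<theta> (\<phi> (filt_exp scale F (\<lambda>x. - \<theta> x) z)) -
     (\<Sum>n<N. scale (1 / fact n) ((adj \<theta> ^^ n) \<phi> z)) \<in> Fi N"
proof -
  let ?t = "\<lambda>x. - \<theta> x"
  have g': "good ?t" using good_neg[OF g] .
  let ?e = "filt_exp scale F \<theta>" and ?e' = "filt_exp scale F ?t"
  let ?T = "\<lambda>k j. (\<theta> ^^ k) (\<phi> ((?t ^^ j) z))"
  have T: "?T k j \<in> Fi (k + j)" for k j
  proof -
    have "(?t ^^ j) z \<in> Fi j" using pow_Fi[OF g', of z 0 j] Fi0 by simp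
    hence "\<phi> ((?t ^^ j) z) \<in> Fi j" by (rule p)
    thus ?thesis using pow_Fi[OF g, of _ j k] by (simp add: add.commute)
  qed
  have 1: "?e (\<phi> (?e' z)) - Esum \<theta> N (\<phi> (Esum ?t N z)) \<in> Fi N"
  proof -
    have a: "?e (\<phi> (?e' z)) - ?e (\<phi> (Esum ?t N z)) \<in> Fi N"
    proof -
      have "?e (\<phi> (?e' z)) - ?e (\<phi> (Esum ?t N z)) = ?e (\<phi> (?e' z - Esum ?t N z))"
        by (simp add: linD(5)[OF exp_lin[OF g]] linD(5)[OF l])
      moreover have "?e (\<phi> (?e' z - Esum ?t N z)) \<in> Fi N"
        by (intro exp_Fi[OF g] p exp_char[OF g'])
      ultimately show ?thesis by simp
    qed
    have b: "?e (\<phi> (Esum ?t N z)) - Esum \<theta> N (\<phi> (Esum ?t N z)) \<in> Fi N" by (rule exp_char[OF g])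
    have eq: "?e (\<phi> (?e' z)) - Esum \<theta> N (\<phi> (Esum ?t N z)) =
      (?e (\<phi> (?e' z)) - ?e (\<phi> (Esum ?t N z))) + (?e (\<phi> (Esum ?t N z)) - Esum \<theta> N (\<phi> (Esum ?t N z)))"
      by simp
    show ?thesis unfolding eq by (rule Fi_add[OF a b])
  qed
  have 2: "Esum \<theta> N (\<phi> (Esum ?t N z)) = (\<Sum>k<N. \<Sum>j<N. scale (1 / fact k) (scale (1 / fact j) (?T k j)))"
    unfolding Esum_def
    by (simp add: linD(6)[OF l] linD(2)[OF l] linD(6)[OF pow_lin[OF g]] linD(2)[OF pow_lin[OF g]]
        vs.scale_sum_right del: funpow.simps)
  have 3: "(\<Sum>n<N. scale (1 / fact n) ((adj \<theta> ^^ n) \<phi> z)) =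
     (\<Sum>n<N. scale (1 / fact n) (\<Sum>k\<le>n. scale (of_nat (n choose k)) (?T k (n - k))))"
    unfolding ad_binom[OF g l] ..
  have 4: "Esum \<theta> N (\<phi> (Esum ?t N z)) - (\<Sum>n<N. scale (1 / fact n) ((adj \<theta> ^^ n) \<phi> z)) \<in> Fi N"
    unfolding 2 3 by (rule exp_double[OF T])
  show ?thesis using Fi_add[OF 1 4] by simp
qed

lemma exp_inv:
  assumes g: "good \<theta>"
  shows "filt_exp scale F \<theta> (filt_exp scale F (\<lambda>x. - \<theta> x) z) = z"
proof (rule Fi_eq)
  fix N
  show "filt_exp scale F \<theta> (filt_exp scale F (\<lambda>x. - \<theta> x) z) - z \<in> Fi N"
  proof (cases N)
    case 0 thus ?thesis using Fi0 by simp
  next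
    case (Suc M)
    have s: "(\<Sum>n<N. scale (1 / fact n) ((adj \<theta> ^^ n) (\<lambda>x. x) z)) = z"
      unfolding Suc sum.lessThan_Suc_shift using ad_id[OF goodD(1)[OF g]] by simp
    show ?thesis using conj_approx[OF g lin_id, of z N] unfolding s by simp
  qed
qed

lemma exp_inv2:
  assumes g: "good \<theta>"
  shows "filt_exp scale F (\<lambda>x. - \<theta> x) (filt_exp scale F \<theta> z) = z"
proof -
  have "(\<lambda>x. - (- \<theta> x)) = \<theta>" by simp
  thus ?thesis using exp_inv[OF good_neg[OF g], of z] by simp
qed

lemma exp_bij: "good \<theta> \<Longrightarrow> bij (filt_exp scale F \<theta>)"
  by (rule o_bij[where g = "filt_exp scale F (\<lambda>x. - \<theta> x)"]) (simp_all add: fun_eq_iff exp_inv exp_inv2)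

lemma der_br_adj: "der_br scale 0 l \<theta> = adj \<theta>"
  by (simp add: fun_eq_iff der_br_def adj_def gsgn0)

lemma der_D_adj: "der_D scale d 0 \<theta> = (\<lambda>y. - adj \<theta> d y)"
  by (simp add: fun_eq_iff der_D_def adj_def gsgn0)

lemma ad_Mg:
  assumes t: "\<theta> \<in> Mg 0" and b: "b \<in> Mg (-1)"
  shows "(adj \<theta> ^^ i) b \<in> Mg (-1) \<and> (adj \<theta> ^^ i) b \<in> MFi i"
proof (induction i)
  case 0 thus ?case using b MFi0[OF b] by simp
next
  case (Suc i)
  have e: "(adj \<theta> ^^ Suc i) b = der_br scale 0 (-1) \<theta> ((adj \<theta> ^^ i) b)" by (simp add: der_br_adj)
  show ?case unfolding e using Mg_br[OF t, of "(adj \<theta> ^^ i) b" "-1"] MFi_br[OF t, of "(adj \<theta> ^^ i) b" "-1" i] Suc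
    by simp
qed

lemma M_series:
  assumes a: "\<And>i. a i \<in> Mg k \<and> a i \<in> MFi i"
  shows "filt_Lim (Mg k) MF (\<lambda>m y. \<Sum>i<m. scale (c i) (a i y)) z - (\<Sum>i<j. scale (c i) (a i z)) \<in> Fi j"
proof -
  let ?s = "\<lambda>m y. \<Sum>i<m. scale (c i) (a i y)"
  have sc: "(\<lambda>y. scale (c i) (a i y)) \<in> Mg k" for i using Mg_scale a by blast
  have sM: "?s m \<in> Mg k" for m using Mg_sum[of "{..<m}" "\<lambda>i y. scale (c i) (a i y)" k] sc by simp
  have cauchy: "?s m - ?s j \<in> MFi j" if "j \<le> m" for j m
    using that
  proof (induction m rule: dec_induct)
    case base
    have "?s j - ?s j = (\<lambda>_. 0)" by (simp add: fun_eq_iff)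
    thus ?case using MFi_zero by simp
  next
    case (step m)
    have eq: "?s (Suc m) - ?s j = (\<lambda>y. (?s m - ?s j) y + scale (c m) (a m y))" by (simp add: fun_eq_iff)
    have am: "a m \<in> MFi j" using MFi_mono[OF step(1)] a by blast
    show ?case unfolding eq
      by (rule MFi_add[OF Mg_diff[OF sM sM] step(3) sc MFi_scale[OF _ am]]) (use a in blast)
  qed
  have L: "filt_Lim (Mg k) MF ?s \<in> Mg k \<and> (\<forall>j. filt_Lim (Mg k) MF ?s - ?s j \<in> MFi j)"
    by (rule M_lim[OF sM cauchy])
  hence "(filt_Lim (Mg k) MF ?s - ?s j) z \<in> Fi j"
    using MFi_pt[OF Mg_diff[OF _ sM]] by blast
  thus ?thesis by simp
qed

lemma gauge_approx:
  assumes t: "\<theta> \<in> Mg 0" and dl: "\<delta> \<in> Mg (-1)"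
  shows "gauge scale d Mg MF \<theta> \<delta> z -
    ((\<Sum>n<N. scale (1 / fact n) ((adj \<theta> ^^ n) (\<lambda>y. d y + \<delta> y) z)) - d z) \<in> Fi N"
proof -
  have g: "good \<theta>" by (rule Mg0_good[OF t])
  have l: "lin scale \<theta>" by (rule goodD(1)[OF g])
  define S1 where "S1 = filt_Lim (Mg (-1)) MF (\<lambda>k y. \<Sum>i<k. scale (1 / fact i) ((adj \<theta> ^^ i) \<delta> y))"
  define S2 where "S2 = filt_Lim (Mg (-1)) MF (\<lambda>k y. \<Sum>i<k. scale (1 / fact (Suc i)) ((adj \<theta> ^^ i) (der_D scale d 0 \<theta>) y))"
  have gd: "gauge scale d Mg MF \<theta> \<delta> z = S1 z - S2 z"
    by (simp add: gauge_def Let_def der_br_adj S1_def S2_def)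
  have DM: "der_D scale d 0 \<theta> \<in> Mg (-1)" using Mg_D[OF t] by simp
  show ?thesis
  proof (cases N)
    case 0 thus ?thesis using Fi0 by simp
  next
    case (Suc M)
    define P where "P = (\<Sum>i<Suc M. scale (1 / fact i) ((adj \<theta> ^^ i) \<delta> z))"
    define Q where "Q = (\<Sum>i<Suc M. scale (1 / fact (Suc i)) ((adj \<theta> ^^ Suc i) d z))"
    define Q' where "Q' = (\<Sum>i<M. scale (1 / fact (Suc i)) ((adj \<theta> ^^ Suc i) d z))"
    define last where "last = scale (1 / fact (Suc M)) ((adj \<theta> ^^ Suc M) d z)"
    have QQ: "Q = Q' + last" by (simp add: Q_def Q'_def last_def)
    have a1: "S1 z - P \<in> Fi N"
      unfolding S1_def P_def Suc[symmetric] by (rule M_series) (rule ad_Mg[OF t dl])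
    have s2eq: "(\<Sum>i<Suc M. scale (1 / fact (Suc i)) ((adj \<theta> ^^ i) (der_D scale d 0 \<theta>) z)) = - Q"
    proof -
      have "(adj \<theta> ^^ i) (der_D scale d 0 \<theta>) z = - ((adj \<theta> ^^ Suc i) d z)" for i
        unfolding der_D_adj ad_neg[OF l] by (simp add: funpow_Suc_right del: funpow.simps)
      thus ?thesis by (simp add: Q_def sum_negf del: funpow.simps)
    qed
    have a2: "S2 z - (- Q) \<in> Fi N"
      unfolding S2_def s2eq[symmetric] Suc[symmetric] by (rule M_series) (rule ad_Mg[OF t DM])
    have a3: "last \<in> Fi N"
    proof -
      have "(adj \<theta> ^^ Suc M) d z \<in> Fi (0 + Suc M)"
        using ad_Fi[OF g, where \<phi> = d and z = z and j = 0 and n = "Suc M", OF Fi_d] Fi0 by blast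
      thus ?thesis unfolding last_def Suc by (simp add: Fi_scale)
    qed
    have sumeq: "(\<Sum>n<N. scale (1 / fact n) ((adj \<theta> ^^ n) (\<lambda>y. d y + \<delta> y) z)) = P + (d z + Q')"
    proof -
      have "(\<Sum>n<N. scale (1 / fact n) ((adj \<theta> ^^ n) (\<lambda>y. d y + \<delta> y) z)) =
         (\<Sum>n<Suc M. scale (1 / fact n) ((adj \<theta> ^^ n) \<delta> z)) + (\<Sum>n<Suc M. scale (1 / fact n) ((adj \<theta> ^^ n) d z))"
        unfolding Suc ad_add[OF l] by (simp add: vs.scale_right_distrib sum.distrib add.commute)
      also have "(\<Sum>n<Suc M. scale (1 / fact n) ((adj \<theta> ^^ n) d z)) = d z + Q'"
        unfolding sum.lessThan_Suc_shift Q'_def by simp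
      finally show ?thesis unfolding P_def .
    qed
    have eq: "S1 z - S2 z - (P + (d z + Q') - d z) = (S1 z - P) - (S2 z - (- Q)) + last"
      by (simp add: QQ algebra_simps)
    show ?thesis unfolding gd sumeq eq by (intro Fi_add Fi_diff a1 a2 a3)
  qed
qed

lemma conj_gauge:
  assumes t: "\<theta> \<in> Mg 0" and dl: "\<delta> \<in> Mg (-1)"
  shows "filt_exp scale F \<theta> (d (filt_exp scale F (\<lambda>x. - \<theta> x) z) + \<delta> (filt_exp scale F (\<lambda>x. - \<theta> x) z)) =
     d z + gauge scale d Mg MF \<theta> \<delta> z"
proof (rule Fi_eq)
  fix N
  have g: "good \<theta>" by (rule Mg0_good[OF t])
  let ?phi = "\<lambda>y. d y + \<delta> y"
  have l: "lin scale ?phi" by (rule lin_add[OF d_lin Mg_lin[OF dl]])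
  have p: "?phi x \<in> Fi j" if "x \<in> Fi j" for j x
    using Fi_add[OF Fi_d[OF that] Fi_monoD[OF Mg_Fi[OF dl that]]] by simp
  let ?S = "\<Sum>n<N. scale (1 / fact n) ((adj \<theta> ^^ n) ?phi z)"
  let ?L = "filt_exp scale F \<theta> (?phi (filt_exp scale F (\<lambda>x. - \<theta> x) z))"
  have 1: "?L - ?S \<in> Fi N" using conj_approx[OF g l p] by simp
  have 2: "gauge scale d Mg MF \<theta> \<delta> z - (?S - d z) \<in> Fi N" by (rule gauge_approx[OF t dl])
  have eq: "?L - (d z + gauge scale d Mg MF \<theta> \<delta> z) = (?L - ?S) - (gauge scale d Mg MF \<theta> \<delta> z - (?S - d z))"
    by (simp add: algebra_simps)
  show "?L - (d z + gauge scale d Mg MF \<theta> \<delta> z) \<in> Fi N" unfolding eq by (rule Fi_diff[OF 1 2])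
qed

lemma iso_of_gauge:
  assumes t: "\<theta> \<in> Mg 0" and dl: "\<delta> \<in> Mg (-1)"
  shows "dgl_iso scale Lg br (filt_exp scale F \<theta>) (\<lambda>x. d x + \<delta> x) (\<lambda>x. d x + gauge scale d Mg MF \<theta> \<delta> x)"
proof -
  have g: "good \<theta>" by (rule Mg0_good[OF t])
  have "filt_exp scale F \<theta> (d x + \<delta> x) = d (filt_exp scale F \<theta> x) + gauge scale d Mg MF \<theta> \<delta> (filt_exp scale F \<theta> x)" for x
    using conj_gauge[OF t dl, of "filt_exp scale F \<theta> x"] exp_inv2[OF g, of x] by simp
  thus ?thesis unfolding dgl_iso_def
    using exp_bij[OF g] lin_linear[OF exp_lin[OF g]] exp_Lg[OF g] exp_br[OF g] by blast
qed

lemma gauge_of_iso: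
  assumes t: "\<theta> \<in> Mg 0" and dl: "\<delta> \<in> Mg (-1)"
    and iso: "dgl_iso scale Lg br (filt_exp scale F \<theta>) (\<lambda>x. d x + \<delta> x) (\<lambda>x. d x + \<eta> x)"
  shows "gauge scale d Mg MF \<theta> \<delta> = \<eta>"
proof
  fix z
  have g: "good \<theta>" by (rule Mg0_good[OF t])
  let ?w = "filt_exp scale F (\<lambda>x. - \<theta> x) z"
  have h: "filt_exp scale F \<theta> (d ?w + \<delta> ?w) = d (filt_exp scale F \<theta> ?w) + \<eta> (filt_exp scale F \<theta> ?w)"
    using iso unfolding dgl_iso_def by blast
  hence "filt_exp scale F \<theta> (d ?w + \<delta> ?w) = d z + \<eta> z" using exp_inv[OF g, of z] by simp
  thus "gauge scale d Mg MF \<theta> \<delta> z = \<eta> z" using conj_gauge[OF t dl, of z] by simp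
qed

end



theorem proposition2p1:
  fixes scale :: "rat \<Rightarrow> 'a::ab_group_add \<Rightarrow> 'a"
    and Lg :: "int \<Rightarrow> 'a set"
    and br :: "'a \<Rightarrow> 'a \<Rightarrow> 'a"
    and d :: "'a \<Rightarrow> 'a"
    and F :: "nat \<Rightarrow> 'a set"
    and Mg :: "int \<Rightarrow> ('a \<Rightarrow> 'a) set"
    and MF :: "nat \<Rightarrow> ('a \<Rightarrow> 'a) set"
    and \<delta> \<eta> :: "'a \<Rightarrow> 'a"
  assumes L: "cdgl scale Lg br d F"
    and M: "complete_sub_dgl scale Lg br d F Mg MF"
    and \<delta>: "MC scale d Mg \<delta>"
    and \<eta>: "MC scale d Mg \<eta>"
  shows "(gauge_related scale d Mg MF \<delta> \<eta> \<longleftrightarrow>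
           (\<exists>\<theta>\<in>Mg 0. dgl_iso scale Lg br (filt_exp scale F \<theta>)
                          (\<lambda>x. d x + \<delta> x) (\<lambda>x. d x + \<eta> x)))
       \<and> (\<forall>\<theta>\<in>Mg 0. dgl_iso scale Lg br (filt_exp scale F \<theta>) (\<lambda>x. d x + \<delta> x) (\<lambda>x. d x + \<eta> x)
              \<longrightarrow> gauge scale d Mg MF \<theta> \<delta> = \<eta>)"
proof -
  interpret P: PS scale Lg br d F Mg MF by (rule PS.intro[OF L M])
  have dl: "\<delta> \<in> Mg (-1)" using \<delta> by (simp add: MC_def)
  have part2: "\<forall>\<theta>\<in>Mg 0. dgl_iso scale Lg br (filt_exp scale F \<theta>) (\<lambda>x. d x + \<delta> x) (\<lambda>x. d x + \<eta> x)
              \<longrightarrow> gauge scale d Mg MF \<theta> \<delta> = \<eta>"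
    using P.gauge_of_iso[OF _ dl] by blast
  have part1: "gauge_related scale d Mg MF \<delta> \<eta> \<longleftrightarrow>
           (\<exists>\<theta>\<in>Mg 0. dgl_iso scale Lg br (filt_exp scale F \<theta>)
                          (\<lambda>x. d x + \<delta> x) (\<lambda>x. d x + \<eta> x))"
  proof
    assume "gauge_related scale d Mg MF \<delta> \<eta>"
    then obtain \<theta> where t: "\<theta> \<in> Mg 0" and ge: "gauge scale d Mg MF \<theta> \<delta> = \<eta>"
      unfolding gauge_related_def by blast
    have "dgl_iso scale Lg br (filt_exp scale F \<theta>) (\<lambda>x. d x + \<delta> x) (\<lambda>x. d x + gauge scale d Mg MF \<theta> \<delta> x)"
      by (rule P.iso_of_gauge[OF t dl])
    hence "dgl_iso scale Lg br (filt_exp scale F \<theta>) (\<lambda>x. d x + \<delta> x) (\<lambda>x. d x + \<eta> x)"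
      unfolding ge .
    thus "\<exists>\<theta>\<in>Mg 0. dgl_iso scale Lg br (filt_exp scale F \<theta>) (\<lambda>x. d x + \<delta> x) (\<lambda>x. d x + \<eta> x)"
      using t by blast
  next
    assume "\<exists>\<theta>\<in>Mg 0. dgl_iso scale Lg br (filt_exp scale F \<theta>) (\<lambda>x. d x + \<delta> x) (\<lambda>x. d x + \<eta> x)"
    then obtain \<theta> where t: "\<theta> \<in> Mg 0"
      and iso: "dgl_iso scale Lg br (filt_exp scale F \<theta>) (\<lambda>x. d x + \<delta> x) (\<lambda>x. d x + \<eta> x)" by blast
    have "gauge scale d Mg MF \<theta> \<delta> = \<eta>" by (rule P.gauge_of_iso[OF t dl iso])
    thus "gauge_related scale d Mg MF \<delta> \<eta>" unfolding gauge_related_def using t by blast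
  qed
  show ?thesis using part1 part2 by blast
qed

end
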